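(* The function $g(x)=\dfrac{\exp(H(x))\log(H(x))}{x}$ is increasing on $[4,\infty)$.
   Context: $H(x)=\int_0^1\frac{t^x-1}{t-1}\,dt$ for real $x\ge1$; it is smooth, satisfies $H(n)=1+\frac12+\cdots+\frac1n$ for $n\in\mathbb{N}$, and $H(x)=\psi(x+1)+\gamma$ with $\psi=\Gamma'/\Gamma$ the digamma function. *)

theory Defs
  imports "HOL-Analysis.Analysis"
begin

text \<open>Harmonic-number interpolation H(x) = int_0^1 (t^x - 1)/(t - 1) dt, for real x \<ge> 1.\<close>
definition H :: "real \<Rightarrow> real" where
  "H x = integral {0..1} (\<lambda>t. (t powr x - 1) / (t - 1))"

definition g :: "real \<Rightarrow> real" where
  "g x = exp (H x) * ln (H x) / x"

end

theory Submission
  imports Defs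
begin


lemma term_int:
  fixes x :: real and k :: nat assumes x: "x \<ge> 0"
  shows "((\<lambda>t. t^k * (1 - t powr x)) has_integral (1/(real k+1) - 1/(real k+x+1))) {0..1}"
proof -
  have a: "((\<lambda>t. t powr (real k)) has_integral (1/(k+1))) {0..1}"
    using has_integral_powr_from_0[of "real k" 1] by (simp add: add.commute)
  have b: "((\<lambda>t. t powr (real k + x)) has_integral (1/(k+x+1))) {0..1}"
    using has_integral_powr_from_0[of "real k + x" 1] x by (simp add: add_ac)
  have c: "((\<lambda>t. t powr (real k) - t powr (real k + x)) has_integral (1/(real k+1) - 1/(real k+x+1))) {0..1}"
    using has_integral_diff[OF a b] by (simp add: add_ac)
  show ?thesis
  proof (rule has_integral_spike_finite[OF _ _ c, of "{0}"])
    fix t :: real assume "t \<in> {0..1} - {0}"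
    then have t: "t > 0" by auto
    show "t^k * (1 - t powr x) = t powr (real k) - t powr (real k + x)"
      using t by (simp add: powr_add powr_realpow algebra_simps)
  qed auto
qed

lemma H_sums:
  fixes x :: real assumes x: "x \<ge> 0"
  shows "(\<lambda>k::nat. 1/(real k+1) - 1/(real k+x+1)) sums (Digamma (x+1) + euler_mascheroni)"
proof -
  have "x + 1 \<noteq> 0" using x by simp
  from summable_Digamma[OF this] have "(\<lambda>n. inverse (of_nat (Suc n)) - inverse (x + 1 + of_nat n))
              sums (Digamma (x+1) + euler_mascheroni)"
    by (simp add: Digamma_def summable_sums)
  then show ?thesis by (simp add: inverse_eq_divide add_ac)
qed

lemma H_eq:
  fixes x :: real assumes x: "x \<ge> 0"
  shows "integral {0..1} (\<lambda>t. (t powr x - 1) / (t - 1)) = Digamma (x+1) + euler_mascheroni"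
proof -
  define S where "S = (\<lambda>n t. \<Sum>k<n. t^k * (1 - t powr x))"
  have Sint: "(S n has_integral (\<Sum>k::nat<n. 1/(real k+1) - 1/(real k+x+1))) {0..1}" for n
    unfolding S_def by (intro has_integral_sum term_int x) auto
  have pl: "t powr x \<le> 1" if "t \<in> {0..1}" for t
    using that x powr_mono2[of x t 1] by auto
  have mono: "S k t \<le> S (Suc k) t" if "t \<in> {0..1}" for k t
    using that pl[OF that] by (simp add: S_def)
  have conv: "((\<lambda>k. S k t) \<longlongrightarrow> (t powr x - 1) / (t - 1)) sequentially" if "t \<in> {0..1}" for t
  proof (cases "t = 1")
    case True then show ?thesis by (simp add: S_def)
  next
    case False
    with that have "norm t < 1" by auto
    from sums_mult2[OF geometric_sums[OF this], of "1 - t powr x"]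
    have "(\<lambda>k. t^k * (1 - t powr x)) sums ((1 - t powr x) / (1 - t))" by simp
    also have "(1 - t powr x) / (1 - t) = (t powr x - 1) / (t - 1)"
      using False by (simp add: field_simps)
    finally show ?thesis by (simp add: S_def sums_def)
  qed
  have lim: "(\<lambda>n. \<Sum>k<n. 1/(real k+1) - 1/(real k+x+1)) \<longlonglongrightarrow> Digamma (x+1) + euler_mascheroni"
    using H_sums[OF x] by (simp add: sums_def)
  have eq: "(\<lambda>k. integral {0..1} (S k)) = (\<lambda>n. \<Sum>k::nat<n. 1/(real k+1) - 1/(real k+x+1))"
    by (rule ext) (rule integral_unique[OF Sint])
  have bou: "bounded (range (\<lambda>k. integral {0..1} (S k)))"
    unfolding eq by (rule convergent_imp_bounded[OF lim])
  from monotone_convergence_increasing[of S "{0..1}", OF _ mono conv bou]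
  have "((\<lambda>k. integral {0..1} (S k)) \<longlonglongrightarrow> integral {0..1} (\<lambda>t. (t powr x - 1) / (t - 1)))"
    using Sint by (auto simp: integrable_on_def)
  moreover have "(\<lambda>k. integral {0..1} (S k)) \<longlonglongrightarrow> Digamma (x+1) + euler_mascheroni"
    unfolding eq by (rule lim)
  ultimately show ?thesis using LIMSEQ_unique by blast
qed



lemma trigamma_lb:
  fixes x :: real assumes x: "x \<ge> 0"
  shows "Polygamma 1 (x+1) > 1/(x+1)"
proof -
  have z: "x + 1 \<noteq> 0" using x by simp
  have s1: "(\<lambda>k. inverse ((x + 1 + of_nat k)^2)) sums Polygamma 1 (x+1)"
    using Polygamma_LIMSEQ[OF z, of 1] by (simp add: power2_eq_square)
  have "(\<lambda>k. inverse (x + 1 + real k)) \<longlonglongrightarrow> 0"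
    by (intro filterlim_compose[OF tendsto_inverse_0]
              tendsto_add_filterlim_at_infinity[OF tendsto_const] tendsto_of_nat)
  from telescope_sums'[OF this]
  have s2: "(\<lambda>k. inverse (x + 1 + real k) - inverse (x + 1 + real (Suc k))) sums (1/(x+1))"
    by (simp add: inverse_eq_divide)
  from sums_diff[OF s1 s2] have s3:
    "(\<lambda>k. inverse ((x + 1 + of_nat k)^2) - (inverse (x + 1 + real k) - inverse (x + 1 + real (Suc k))))
      sums (Polygamma 1 (x+1) - 1/(x+1))" .
  have pos: "0 < inverse ((x + 1 + of_nat k)^2) - (inverse (x + 1 + real k) - inverse (x + 1 + real (Suc k)))" for k
  proof -
    define a where "a = x + 1 + real k"
    have a: "a > 0" using x by (simp add: a_def)
    have "inverse (x + 1 + real (Suc k)) = 1/(a+1)" by (simp add: a_def inverse_eq_divide add_ac)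
    moreover have "inverse (a^2) - (inverse a - 1/(a+1)) = 1/(a^2*(a+1))"
    proof -
      have "a + 1 \<noteq> 0" "a \<noteq> 0" using a by auto
      then show ?thesis by (simp add: divide_simps power2_eq_square)
    qed
    moreover have "x + 1 + of_nat k = a" by (simp add: a_def)
    ultimately show ?thesis using a by simp
  qed
  have "0 < Polygamma 1 (x+1) - 1/(x+1)"
    using suminf_pos[OF sums_summable[OF s3] pos] s3 by (simp add: sums_iff)
  then show ?thesis by simp
qed

lemma deriv_h:
  fixes x :: real assumes x: "x \<ge> 0"
  shows "((\<lambda>x. Digamma (x+1) + euler_mascheroni) has_real_derivative Polygamma 1 (x+1)) (at x)"
proof -
  have "x + 1 \<notin> \<int>\<^sub>\<le>\<^sub>0" using x by (auto elim!: nonpos_Ints_cases)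
  from has_field_derivative_Polygamma[OF this, of 0 UNIV]
  have "(Digamma has_real_derivative Polygamma 1 (x+1)) (at (x+1))" by simp
  hence "((\<lambda>x. Digamma (x+1)) has_real_derivative Polygamma 1 (x+1)) (at x)"
    by (simp add: DERIV_shift)
  from DERIV_add[OF this DERIV_const] show ?thesis by simp
qed

lemma h_lower:
  fixes x :: real assumes x: "x \<ge> 4"
  shows "Digamma (x+1) + euler_mascheroni \<ge> 25/12"
proof -
  have "Digamma (5::real) \<le> Digamma (x+1)" using x by (intro Digamma_real_mono) auto
  moreover have "Digamma (5::real) = harm 4 - euler_mascheroni" by (simp add: Digamma_numeral)
  moreover have "harm 4 = (25/12::real)" by (simp add: harm_Suc eval_nat_numeral harm_def)
  ultimately show ?thesis by simp
qed

lemma h_upper: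
  fixes x :: real assumes x: "x \<ge> 4"
  shows "exp (Digamma (x+1) + euler_mascheroni - 1) \<le> x + 1"
proof -
  define n where "n = nat \<lceil>x\<rceil>"
  have n1: "x \<le> real n" "real n \<le> x + 1" "n \<ge> 1" using x by (auto simp: n_def) linarith+
  have "Digamma (x+1) \<le> Digamma (of_nat (Suc n) :: real)"
    using x n1 by (intro Digamma_real_mono) auto
  also have "\<dots> = harm n - euler_mascheroni" by (rule Digamma_of_nat)
  finally have 1: "Digamma (x+1) + euler_mascheroni \<le> harm n" by simp
  have "harm n - ln (of_nat n) \<le> harm 1 - ln (of_nat 1 :: real)"
    using n1 by (intro euler_mascheroni_sequence_decreasing) auto
  hence 2: "harm n \<le> 1 + ln (real n)" by (simp add: harm_def)
  have "exp (Digamma (x+1) + euler_mascheroni - 1) \<le> exp (ln (real n))"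
    using 1 2 by simp
  also have "\<dots> = real n" using n1 by simp
  finally show ?thesis using n1 by simp
qed

lemma key_ineq:
  fixes u :: real assumes u: "u \<ge> 2"
  shows "u * ln u \<le> exp (u - 1) - 1"
proof -
  define f where "f = (\<lambda>u::real. exp (u - 1) - 1 - u * ln u)"
  have e: "exp (1::real) \<ge> 5/2" using exp_lower_Taylor_quadratic[of 1] by simp
  have "exp (3/4::real) \<ge> 1 + 3/4 + (3/4)^2/2" by (rule exp_lower_Taylor_quadratic) simp
  hence "exp (3/4::real) > 2" by (simp add: power2_eq_square)
  hence "ln 2 < (3/4::real)" by (metis exp_gt_zero ln_exp ln_less_cancel_iff zero_less_numeral)
  hence f2: "f 2 \<ge> 0" using e by (simp add: f_def)
  have "f 2 \<le> f u"
  proof (cases "u = 2")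
    case False
    hence "2 < u" using u by simp
    show ?thesis
    proof (rule DERIV_nonneg_imp_nondecreasing[OF u])
      fix y :: real assume y: "2 \<le> y" "y \<le> u"
      have "((\<lambda>u. exp (u - 1) - 1 - u * ln u) has_real_derivative exp (y - 1) - (ln y + 1)) (at y)"
        using y by (auto intro!: derivative_eq_intros)
      moreover have "exp (y - 1) - (ln y + 1) \<ge> 0"
        using exp_ge_add_one_self[of "y - 1"] ln_le_minus_one[of y] y by simp
      ultimately show "\<exists>d. (f has_real_derivative d) (at y) \<and> 0 \<le> d" unfolding f_def by blast
    qed
  qed simp
  with f2 show ?thesis by (simp add: f_def)
qed


lemma pos_part:
  fixes y u p L :: real
  assumes y: "y \<ge> 4" and u: "u \<ge> 2" and L: "L = ln u" and p: "p > 1/(y+1)"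
    and uL: "u * L \<le> y"
  shows "y * p * (L + 1/u) > L"
proof -
  have L0: "L > 0" using u L by simp
  have A: "y * (L + 1/u) > 0" using y u L0 by (simp add: add_pos_pos)
  have "y * p * (L + 1/u) = p * (y * (L + 1/u))" by simp
  also have "\<dots> > 1/(y+1) * (y * (L + 1/u))" using p A by (intro mult_strict_right_mono) auto
  finally have 1: "y * p * (L + 1/u) > y * (L + 1/u) / (y+1)" by simp
  have "L \<le> y / u" using uL u by (simp add: field_simps)
  hence "(y+1) * L \<le> y * (L + 1/u)" by (simp add: algebra_simps)
  hence "L \<le> y * (L + 1/u) / (y+1)" using y by (simp add: field_simps)
  with 1 show ?thesis by simp
qed

theorem mainTheorem17:
  shows "strict_mono_on {4..} g"
proof (rule strict_mono_onI)
  fix r s :: real assume rs: "r \<in> {4..}" "s \<in> {4..}" "r < s"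
  define h where "h = (\<lambda>x::real. Digamma (x+1) + euler_mascheroni)"
  define G where "G = (\<lambda>x. exp (h x) * ln (h x) / x)"
  have gG: "g x = G x" if "x \<ge> 4" for x
    using that by (simp add: g_def G_def h_def H_def H_eq)
  have "G r < G s"
  proof (rule DERIV_pos_imp_increasing[OF rs(3)])
    fix y assume y: "r \<le> y" "y \<le> s"
    hence y4: "y \<ge> 4" using rs by auto
    define p where "p = Polygamma 1 (y+1)"
    define u where "u = h y"
    have dh: "(h has_real_derivative p) (at y)" unfolding h_def p_def
      by (rule deriv_h) (use y4 in simp)
    have u2: "u \<ge> 2" using h_lower[OF y4] by (simp add: u_def h_def)
    have pl: "p > 1/(y+1)" using trigamma_lb[of y] y4 by (simp add: p_def)
    have uL: "u * ln u \<le> y"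
      using key_ineq[OF u2] h_upper[OF y4] by (simp add: u_def h_def)
    have pos: "y * p * (ln u + 1/u) > ln u" by (rule pos_part[OF y4 u2 refl pl uL])
    have "(G has_real_derivative ((exp u * p * ln u + exp u * (p / u)) * y - exp u * ln u) / y^2) (at y)"
      unfolding G_def using u2 y4 dh
      by (auto intro!: derivative_eq_intros simp: u_def power2_eq_square)
    moreover have "((exp u * p * ln u + exp u * (p / u)) * y - exp u * ln u) / y^2 > 0"
    proof -
      have "(exp u * p * ln u + exp u * (p / u)) * y - exp u * ln u = exp u * (y * p * (ln u + 1/u) - ln u)"
        by (simp add: algebra_simps)
      moreover have "exp u * (y * p * (ln u + 1/u) - ln u) > 0" using pos by simp
      ultimately show ?thesis using y4 by simp
    qed
    ultimately show "\<exists>d. (G has_real_derivative d) (at y) \<and> 0 < d" by blast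
  qed
  then show "g r < g s" using rs gG by auto
qed

end
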